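(* Let $(x,q)\in\mathbf J$ with $q$ not an integer, and assume the greedy expansion $(b_i(x,q))$ is infinite (has infinitely many nonzero digits). If $(y_n,r_n)$ is any sequence in $\mathbf J$ converging to $(x,q)$, then both $(a_i(y_n,r_n))_{i\ge1}$ and $(b_i(y_n,r_n))_{i\ge1}$ converge coordinate-wise to $(b_i(x,q))_{i\ge1}=(a_i(x,q))_{i\ge1}$.
   Context: For real $q>1$ let $\lceil q\rceil$ be the smallest integer $\ge q$ and $A_q=\{0,\ldots,\lceil q\rceil-1\}$. Let $\mathbf J$ be the set of $(x,q)$ with $q>1$ and $x\in J_q:=[0,(\lceil q\rceil-1)/(q-1)]$. For $(x,q)\in\mathbf J$: the quasi-greedy expansion $(a_i(x,q))$ is $0^\infty$ if $x=0$, and for $x>0$, recursively $a_n(x,q)$ is the largest element of $A_q$ with $\sum_{i=1}^n a_i(x,q)q^{-i}<x$; the greedy expansion $(b_i(x,q))$ is defined recursively with $b_n(x,q)$ the largest element of $A_q$ with $\sum_{i=1}^n b_i(x,q)q^{-i}\le x$. *)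

theory Defs
  imports "HOL-Analysis.Analysis"
begin

definition alph :: "real \<Rightarrow> nat set" where
  "alph q = {d. d < nat \<lceil>q\<rceil>}"

definition Jset :: "(real \<times> real) set" where
  "Jset = {(x, q). q > 1 \<and> 0 \<le> x \<and> x \<le> (real_of_int \<lceil>q\<rceil> - 1) / (q - 1)}"

fun greedy_list :: "real \<Rightarrow> real \<Rightarrow> nat \<Rightarrow> nat list" where
  "greedy_list x q 0 = []"
| "greedy_list x q (Suc n) =
     (let ds = greedy_list x q n;
          s = (\<Sum>i<n. real (ds ! i) / q ^ (Suc i))
      in ds @ [GREATEST d. d \<in> alph q \<and> s + real d / q ^ (Suc n) \<le> x])"

fun qgreedy_list :: "real \<Rightarrow> real \<Rightarrow> nat \<Rightarrow> nat list" where
  "qgreedy_list x q 0 = []"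
| "qgreedy_list x q (Suc n) =
     (let ds = qgreedy_list x q n;
          s = (\<Sum>i<n. real (ds ! i) / q ^ (Suc i))
      in ds @ [GREATEST d. d \<in> alph q \<and> s + real d / q ^ (Suc n) < x])"

text \<open>Greedy digit b_n(x,q), for n \<ge> 1 (the value at index 0 is irrelevant).\<close>
definition bdig :: "real \<Rightarrow> real \<Rightarrow> nat \<Rightarrow> nat" where
  "bdig x q n = (if n = 0 then 0 else greedy_list x q n ! (n - 1))"

definition adig :: "real \<Rightarrow> real \<Rightarrow> nat \<Rightarrow> nat" where
  "adig x q n = (if n = 0 \<or> x = 0 then 0 else qgreedy_list x q n ! (n - 1))"

end

theory Submission
  imports Defs
begin

lemma greedy_len: "length (greedy_list x q n) = n"
  by (induction n) (simp_all add: Let_def)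

lemma qgreedy_len: "length (qgreedy_list x q n) = n"
  by (induction n) (simp_all add: Let_def)

lemma greedy_nth: "i < n \<Longrightarrow> greedy_list x q n ! i = greedy_list x q (Suc i) ! i"
proof (induction n)
  case 0 then show ?case by simp
next
  case (Suc n)
  show ?case
  proof (cases "i < n")
    case True
    then have "greedy_list x q (Suc n) ! i = greedy_list x q n ! i"
      by (simp add: Let_def nth_append greedy_len)
    then show ?thesis using Suc True by simp
  next
    case False then have "i = n" using Suc by simp
    then show ?thesis by simp
  qed
qed

lemma qgreedy_nth: "i < n \<Longrightarrow> qgreedy_list x q n ! i = qgreedy_list x q (Suc i) ! i"
proof (induction n)
  case 0 then show ?case by simp
next
  case (Suc n)
  show ?case
  proof (cases "i < n")
    case True
    then have "qgreedy_list x q (Suc n) ! i = qgreedy_list x q n ! i"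
      by (simp add: Let_def nth_append qgreedy_len)
    then show ?thesis using Suc True by simp
  next
    case False then have "i = n" using Suc by simp
    then show ?thesis by simp
  qed
qed

lemma bdig_Suc: "bdig x q (Suc n) = (GREATEST d. d \<in> alph q \<and>
   (\<Sum>i<n. real (bdig x q (Suc i)) / q ^ Suc i) + real d / q ^ Suc n \<le> x)"
proof -
  have "(\<Sum>i<n. real (greedy_list x q n ! i) / q ^ Suc i) = (\<Sum>i<n. real (bdig x q (Suc i)) / q ^ Suc i)"
    by (rule sum.cong) (auto simp: bdig_def greedy_nth)
  then show ?thesis by (simp add: bdig_def Let_def nth_append greedy_len)
qed

lemma adig_Suc: "x \<noteq> 0 \<Longrightarrow> adig x q (Suc n) = (GREATEST d. d \<in> alph q \<and>
   (\<Sum>i<n. real (adig x q (Suc i)) / q ^ Suc i) + real d / q ^ Suc n < x)"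
proof -
  assume x: "x \<noteq> 0"
  have "(\<Sum>i<n. real (qgreedy_list x q n ! i) / q ^ Suc i) = (\<Sum>i<n. real (adig x q (Suc i)) / q ^ Suc i)"
    by (rule sum.cong) (auto simp: adig_def qgreedy_nth x)
  then show ?thesis using x by (simp add: adig_def Let_def nth_append qgreedy_len)
qed

lemma greatest_char:
  fixes P :: "nat \<Rightarrow> bool"
  assumes "d < M" "P d" "Suc d = M \<or> \<not> P (Suc d)" "\<And>a b. a \<le> b \<Longrightarrow> P b \<Longrightarrow> P a"
  shows "(GREATEST e. e < M \<and> P e) = d"
proof (rule Greatest_equality)
  show "d < M \<and> P d" using assms by simp
next
  fix e assume e: "e < M \<and> P e"
  show "e \<le> d"
  proof (rule ccontr)
    assume "\<not> e \<le> d"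
    then have "Suc d \<le> e" by simp
    then have "Suc d \<noteq> M" "P (Suc d)" using e assms(4) by auto
    then show False using assms(3) by simp
  qed
qed

lemma main:
  fixes x q :: real and y r :: "nat \<Rightarrow> real"
  assumes q1: "q > 1" and qni: "q \<notin> \<int>" and x0: "x \<ge> 0"
    and inf: "infinite {i. i \<ge> 1 \<and> bdig x q i \<noteq> 0}"
    and y: "y \<longlonglongrightarrow> x" and r: "r \<longlonglongrightarrow> q"
  shows "eventually (\<lambda>k. \<forall>i<n. adig (y k) (r k) (Suc i) = bdig x q (Suc i)
          \<and> bdig (y k) (r k) (Suc i) = bdig x q (Suc i)) sequentially"
proof -
  define B where "B i = bdig x q i" for i
  define S where "S n = (\<Sum>i<n. real (B (Suc i)) / q ^ Suc i)" for n
  define M where "M = nat \<lceil>q\<rceil>"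
  have qpos: "q > 0" using q1 by simp
  have Bdef: "B (Suc n) = (GREATEST d. d < M \<and> S n + real d / q^Suc n \<le> x)" for n
    unfolding B_def S_def M_def using bdig_Suc[of x q n] by (simp add: alph_def)
  have "\<lceil>q\<rceil> \<ge> 1" using q1 by (simp add: one_le_ceiling)
  then have M1: "M \<ge> 1" unfolding M_def by (metis nat_mono nat_one_as_int)
  have SSuc: "S (Suc n) = S n + real (B (Suc n)) / q^Suc n" for n by (simp add: S_def)
  have F: "B (Suc n) < M \<and> S n + real (B (Suc n))/q^Suc n \<le> x \<and>
     (Suc (B (Suc n)) = M \<or> S n + real (Suc (B (Suc n)))/q^Suc n > x)" if Sx: "S n \<le> x" for n
  proof -
    let ?P = "\<lambda>d. d < M \<and> S n + real d / q^Suc n \<le> x"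
    have P0: "?P 0" using M1 Sx by simp
    have bd: "\<And>d. ?P d \<Longrightarrow> d \<le> M" by auto
    have PB: "?P (B (Suc n))" unfolding Bdef by (rule GreatestI_nat[of ?P 0 M, OF P0 bd])
    moreover have "Suc (B (Suc n)) = M \<or> S n + real (Suc (B (Suc n)))/q^Suc n > x"
    proof (rule ccontr)
      assume "\<not> ?thesis"
      then have "?P (Suc (B (Suc n)))" using PB by auto
      then have "Suc (B (Suc n)) \<le> (GREATEST d. ?P d)" by (rule Greatest_le_nat[of ?P _ M, OF _ bd])
      then show False using Bdef[of n] by simp
    qed
    ultimately show ?thesis by blast
  qed
  have Sle: "S n \<le> x" for n
  proof (induction n)
    case 0 then show ?case using x0 by (simp add: S_def)
  next
    case (Suc n) then show ?case using F[OF Suc] SSuc[of n] by simp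
  qed
  have Slt: "S n < x" for n
  proof (rule ccontr)
    assume "\<not> S n < x"
    then have Sn: "S n = x" using Sle[of n] by simp
    have Z: "B (Suc (n + j)) = 0 \<and> S (n + j) = x" for j
    proof (induction j)
      case 0
      have h: "real (B (Suc n)) / q^Suc n \<le> 0" using F[OF Sle[of n]] Sn by simp
      have c: "q^Suc n > 0" using qpos by (rule zero_less_power)
      have "real (B (Suc n)) \<le> 0" using h c by (metis divide_le_0_iff not_le)
      then have "B (Suc n) = 0" by simp
      then show ?case using Sn by simp
    next
      case (Suc j)
      have Sj: "S (n + Suc j) = x" using Suc SSuc[of "n+j"] by simp
      have "real (B (Suc (n + Suc j))) / q^Suc (n + Suc j) \<le> 0"
        using F[OF Sle[of "n + Suc j"]] Sj by simp
      moreover have c: "q^Suc (n + Suc j) > 0" using qpos by (rule zero_less_power)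
      ultimately have "real (B (Suc (n + Suc j))) \<le> 0" by (metis divide_le_0_iff not_le)
      then have "B (Suc (n + Suc j)) = 0" by simp
      then show ?case using Sj by simp
    qed
    have "{i. i \<ge> 1 \<and> bdig x q i \<noteq> 0} \<subseteq> {..n}"
    proof
      fix i assume i: "i \<in> {i. i \<ge> 1 \<and> bdig x q i \<noteq> 0}"
      show "i \<in> {..n}"
      proof (rule ccontr)
        assume "i \<notin> {..n}"
        then have ii: "i = Suc (n + (i - n - 1))" by simp
        have "B (Suc (n + (i - n - 1))) = 0" using Z[of "i - n - 1"] by simp
        then have "B i = 0" using ii by simp
        then show False using i by (simp add: B_def)
      qed
    qed
    then show False using inf finite_subset by blast
  qed
  have xpos: "x > 0" using Slt[of 0] by (simp add: S_def)
  have qc1: "q < of_int \<lceil>q\<rceil>" using qni le_of_int_ceiling[of q]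
    by (metis Ints_of_int order_le_less)
  have qc2: "of_int \<lceil>q\<rceil> - 1 < q" using ceiling_correct[of q] by linarith
  have ev_ceil: "eventually (\<lambda>k. nat \<lceil>r k\<rceil> = M) sequentially"
  proof -
    have "eventually (\<lambda>k. r k < of_int \<lceil>q\<rceil>) sequentially" using order_tendstoD(2)[OF r qc1] .
    moreover have "eventually (\<lambda>k. r k > of_int \<lceil>q\<rceil> - 1) sequentially" using order_tendstoD(1)[OF r qc2] .
    ultimately show ?thesis
    proof eventually_elim
      case (elim k)
      then have "\<lceil>r k\<rceil> = \<lceil>q\<rceil>" by (intro ceiling_unique) auto
      then show ?case by (simp add: M_def)
    qed
  qed
  have ev_y: "eventually (\<lambda>k. y k > 0) sequentially" using order_tendstoD(1)[OF y xpos] .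
  have ev_r: "eventually (\<lambda>k. r k > 0) sequentially" using order_tendstoD(1)[OF r qpos] .
  show ?thesis
  proof (induction n)
    case 0 then show ?case by simp
  next
    case (Suc n)
    define d where "d = B (Suc n)"
    define T where "T k = (\<Sum>i<n. real (B (Suc i)) / r k ^ Suc i)" for k
    have T: "T \<longlonglongrightarrow> S n" unfolding T_def S_def
      by (intro tendsto_intros r) (use qpos in auto)
    have dM: "d < M" and dS: "Suc d = M \<or> S n + real (Suc d)/q^Suc n > x"
      using F[OF Sle[of n]] by (auto simp: d_def)
    have lt: "S n + real d / q^Suc n < x" using Slt[of "Suc n"] SSuc[of n] by (simp add: d_def)
    have "(\<lambda>k. y k - (T k + real d / r k ^ Suc n)) \<longlonglongrightarrow> x - (S n + real d / q ^ Suc n)"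
      by (intro tendsto_intros y T r) (use qpos in auto)
    then have "eventually (\<lambda>k. y k - (T k + real d / r k ^ Suc n) > 0) sequentially"
      by (rule order_tendstoD(1)) (use lt in simp)
    then have ev1: "eventually (\<lambda>k. T k + real d / r k ^ Suc n < y k) sequentially"
      by (rule eventually_mono) simp
    have ev2: "eventually (\<lambda>k. Suc d = M \<or> T k + real (Suc d) / r k ^ Suc n > y k) sequentially"
    proof (cases "Suc d = M")
      case True then show ?thesis by simp
    next
      case False
      then have gt: "S n + real (Suc d)/q^Suc n > x" using dS by simp
      have "(\<lambda>k. (T k + real (Suc d) / r k ^ Suc n) - y k) \<longlonglongrightarrow> (S n + real (Suc d) / q ^ Suc n) - x"
        by (intro tendsto_intros y T r) (use qpos in auto)
      then have "eventually (\<lambda>k. (T k + real (Suc d) / r k ^ Suc n) - y k > 0) sequentially"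
        by (rule order_tendstoD(1)) (use gt in simp)
      then show ?thesis by (rule eventually_mono) simp
    qed
    from Suc ev1 ev2 ev_ceil ev_y ev_r show ?case
    proof eventually_elim
      case (elim k)
      have IH: "\<forall>i<n. adig (y k) (r k) (Suc i) = B (Suc i) \<and> bdig (y k) (r k) (Suc i) = B (Suc i)"
        using elim(1) by (simp add: B_def)
      have rk: "r k > 0" using elim by simp
      have yk0: "y k \<noteq> 0" using elim by simp
      have sb: "(\<Sum>i<n. real (bdig (y k) (r k) (Suc i)) / r k ^ Suc i) = T k"
        unfolding T_def by (rule sum.cong) (use IH in auto)
      have sa: "(\<Sum>i<n. real (adig (y k) (r k) (Suc i)) / r k ^ Suc i) = T k"
        unfolding T_def by (rule sum.cong) (use IH in auto)
      have mono: "real a / r k ^ Suc n \<le> real b / r k ^ Suc n" if "a \<le> b" for a b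
        using that rk by (intro divide_right_mono) auto
      have b: "bdig (y k) (r k) (Suc n) = d"
        unfolding bdig_Suc[of "y k" "r k" n] sb alph_def mem_Collect_eq elim(4)
      proof (rule greatest_char[OF dM])
        show "T k + real d / r k ^ Suc n \<le> y k" using elim(2) by simp
        show "Suc d = M \<or> \<not> T k + real (Suc d) / r k ^ Suc n \<le> y k" using elim(3) by auto
        fix a b :: nat assume "a \<le> b" "T k + real b / r k ^ Suc n \<le> y k"
        then show "T k + real a / r k ^ Suc n \<le> y k" using mono[of a b] by linarith
      qed
      have a: "adig (y k) (r k) (Suc n) = d"
        unfolding adig_Suc[of "y k" "r k" n, OF yk0] sa alph_def mem_Collect_eq elim(4)
      proof (rule greatest_char[OF dM])
        show "T k + real d / r k ^ Suc n < y k" using elim(2) by simp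
        show "Suc d = M \<or> \<not> T k + real (Suc d) / r k ^ Suc n < y k" using elim(3) by auto
        fix a b :: nat assume "a \<le> b" "T k + real b / r k ^ Suc n < y k"
        then show "T k + real a / r k ^ Suc n < y k" using mono[of a b] by linarith
      qed
      show ?case using IH a b by (auto simp: less_Suc_eq d_def B_def)
    qed
  qed
qed

theorem proposition2p6:
  fixes x q :: real and y r :: "nat \<Rightarrow> real"
  assumes "(x, q) \<in> Jset"
    and "q \<notin> \<int>"
    and "infinite {i. i \<ge> 1 \<and> bdig x q i \<noteq> 0}"
    and "\<And>n. (y n, r n) \<in> Jset"
    and "(\<lambda>n. (y n, r n)) \<longlonglongrightarrow> (x, q)"
  shows "(\<forall>i\<ge>1. bdig x q i = adig x q i)
    \<and> (\<forall>i\<ge>1. (\<lambda>n. adig (y n) (r n) i) \<longlonglongrightarrow> bdig x q i)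
    \<and> (\<forall>i\<ge>1. (\<lambda>n. bdig (y n) (r n) i) \<longlonglongrightarrow> bdig x q i)"
proof -
  have q1: "q > 1" and x0: "x \<ge> 0" using assms(1) by (auto simp: Jset_def)
  have y: "y \<longlonglongrightarrow> x" using tendsto_fst[OF assms(5)] by simp
  have r: "r \<longlonglongrightarrow> q" using tendsto_snd[OF assms(5)] by simp
  note M = main[OF q1 assms(2) x0 assms(3)]
  have R: "(\<lambda>n. adig (yy n) (rr n) i) \<longlonglongrightarrow> bdig x q i \<and> (\<lambda>n. bdig (yy n) (rr n) i) \<longlonglongrightarrow> bdig x q i"
    if i1: "i \<ge> 1" "yy \<longlonglongrightarrow> x" "rr \<longlonglongrightarrow> q" for i yy rr
  proof -
    obtain j where j: "i = Suc j" using i1 by (cases i) auto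
    have E: "eventually (\<lambda>k. adig (yy k) (rr k) i = bdig x q i \<and> bdig (yy k) (rr k) i = bdig x q i) sequentially"
      using M[OF that(2,3), of "Suc j"] by (rule eventually_mono) (simp add: j)
    have "eventually (\<lambda>k. adig (yy k) (rr k) i = bdig x q i) sequentially"
      using E by (rule eventually_mono) simp
    moreover have "eventually (\<lambda>k. bdig (yy k) (rr k) i = bdig x q i) sequentially"
      using E by (rule eventually_mono) simp
    ultimately show ?thesis by (simp add: tendsto_eventually)
  qed
  have "bdig x q i = adig x q i" if "i \<ge> 1" for i
  proof -
    have "(\<lambda>n. adig x q i) \<longlonglongrightarrow> bdig x q i" using R[OF that tendsto_const tendsto_const] by simp
    then show ?thesis by (simp add: LIMSEQ_const_iff)
  qed
  then show ?thesis using R[OF _ y r] by blast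
qed

end
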